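(* Let $G$ be a graph with $n$ vertices and $m$ edges such that $\omega(G)=\chi(G)$ (i.e. $G$ is weakly perfect), and write $\omega=\omega(G)$. Let $\mu_1\ge\mu_2\ge\cdots\ge\mu_n$ be the eigenvalues of the adjacency matrix of $G$, let $n^+$ be the number of positive eigenvalues, and let $\ell=\min(n^+,\omega)$. Then \[ \mu_1^2+\mu_2^2+\cdots+\mu_\ell^2\le \frac{2m(\omega-1)}{\omega}. \]
   Context: $\omega(G)$ denotes the clique number and $\chi(G)$ the chromatic number of $G$. Eigenvalues are those of the adjacency matrix. An empty sum (when $\ell=0$) equals $0$. *)

theory Defs
  imports "Jordan_Normal_Form.Char_Poly"
begin

definition simple_graph :: "nat \<Rightarrow> (nat \<Rightarrow> nat \<Rightarrow> bool) \<Rightarrow> bool" where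
  "simple_graph n E \<longleftrightarrow> (\<forall>i<n. \<forall>j<n. E i j \<longleftrightarrow> E j i) \<and> (\<forall>i<n. \<not> E i i)"

definition num_edges :: "nat \<Rightarrow> (nat \<Rightarrow> nat \<Rightarrow> bool) \<Rightarrow> nat" where
  "num_edges n E = card {(i, j). i < j \<and> j < n \<and> E i j}"

definition is_clique :: "nat \<Rightarrow> (nat \<Rightarrow> nat \<Rightarrow> bool) \<Rightarrow> nat set \<Rightarrow> bool" where
  "is_clique n E K \<longleftrightarrow> K \<subseteq> {0..<n} \<and> (\<forall>i\<in>K. \<forall>j\<in>K. i \<noteq> j \<longrightarrow> E i j)"

definition clique_number :: "nat \<Rightarrow> (nat \<Rightarrow> nat \<Rightarrow> bool) \<Rightarrow> nat" where
  "clique_number n E = Max {card K | K. is_clique n E K}"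

definition proper_colouring :: "nat \<Rightarrow> (nat \<Rightarrow> nat \<Rightarrow> bool) \<Rightarrow> nat \<Rightarrow> (nat \<Rightarrow> nat) \<Rightarrow> bool" where
  "proper_colouring n E k c \<longleftrightarrow> (\<forall>i<n. c i < k) \<and> (\<forall>i<n. \<forall>j<n. E i j \<longrightarrow> c i \<noteq> c j)"

definition chromatic_number :: "nat \<Rightarrow> (nat \<Rightarrow> nat \<Rightarrow> bool) \<Rightarrow> nat" where
  "chromatic_number n E = (LEAST k. \<exists>c. proper_colouring n E k c)"

definition adj_matrix :: "nat \<Rightarrow> (nat \<Rightarrow> nat \<Rightarrow> bool) \<Rightarrow> real mat" where
  "adj_matrix n E = mat n n (\<lambda>(i, j). if E i j then 1 else 0)"

text \<open>mu is the list of adjacency eigenvalues, with multiplicity, in nonincreasing order: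
  the characteristic polynomial splits as the product of (x - mu_i).\<close>
definition adj_eigenvalues_sorted :: "nat \<Rightarrow> (nat \<Rightarrow> nat \<Rightarrow> bool) \<Rightarrow> real list \<Rightarrow> bool" where
  "adj_eigenvalues_sorted n E mu \<longleftrightarrow> length mu = n \<and> sorted_wrt (\<ge>) mu \<and>
     char_poly (adj_matrix n E) = (\<Prod>a\<leftarrow>mu. [:- a, 1:])"

end

theory Submission
  imports Defs "Jordan_Normal_Form.Schur_Decomposition"
begin


lemma mult_entry:
  fixes X Y :: "'a::comm_ring_1 mat"
  assumes "X \<in> carrier_mat n n" "Y \<in> carrier_mat n n" "i < n" "j < n"
  shows "(X*Y)$$(i,j) = (\<Sum>t<n. X$$(i,t) * Y$$(t,j))"
  using assms by (simp add: scalar_prod_def lessThan_atLeast0)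

definition mtr :: "nat \<Rightarrow> 'a::comm_ring_1 mat \<Rightarrow> 'a" where
  "mtr n X = (\<Sum>i<n. X$$(i,i))"

lemma mtr_comm:
  fixes X Y :: "'a::comm_ring_1 mat"
  assumes "X \<in> carrier_mat n n" "Y \<in> carrier_mat n n"
  shows "mtr n (X*Y) = mtr n (Y*X)"
proof -
  have "mtr n (X*Y) = (\<Sum>i<n. \<Sum>t<n. X$$(i,t) * Y$$(t,i))"
    unfolding mtr_def by (rule sum.cong[OF refl], rule mult_entry[OF assms]) auto
  also have "\<dots> = (\<Sum>t<n. \<Sum>i<n. Y$$(t,i) * X$$(i,t))"
    by (subst sum.swap) (simp add: mult.commute)
  also have "\<dots> = mtr n (Y*X)"
    unfolding mtr_def by (rule sym, rule sum.cong[OF refl], rule mult_entry[OF assms(2,1)]) auto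
  finally show ?thesis .
qed

lemma mtr_sim:
  fixes X P Q :: "'a::comm_ring_1 mat"
  assumes "X \<in> carrier_mat n n" "P \<in> carrier_mat n n" "Q \<in> carrier_mat n n" "Q * P = 1\<^sub>m n"
  shows "mtr n (P*X*Q) = mtr n X"
proof -
  have "mtr n (P*X*Q) = mtr n (Q*(P*X))"
    using assms by (intro mtr_comm) auto
  also have "Q*(P*X) = X"
  proof -
    have "Q*(P*X) = (Q*P)*X" using assms by (metis assoc_mult_mat)
    then show ?thesis using assms by simp
  qed
  finally show ?thesis .
qed

lemma upper_pow:
  fixes B :: "'a::comm_ring_1 mat"
  assumes B: "B \<in> carrier_mat n n" "upper_triangular B"
  shows "upper_triangular (B ^\<^sub>m k) \<and> (\<forall>i<n. (B ^\<^sub>m k)$$(i,i) = (B$$(i,i))^k)"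
proof (induction k)
  case 0
  then show ?case using B by auto
next
  case (Suc k)
  let ?C = "B ^\<^sub>m k"
  have C: "?C \<in> carrier_mat n n" using B by simp
  have lo: "(?C * B)$$(i,j) = 0" if "i < n" "j < i" for i j
  proof -
    have "(?C * B)$$(i,j) = (\<Sum>t<n. ?C$$(i,t) * B$$(t,j))"
      using that C B by (intro mult_entry) auto
    also have "\<dots> = 0"
    proof (rule sum.neutral, rule ballI)
      fix t assume t: "t \<in> {..<n}"
      show "?C$$(i,t) * B$$(t,j) = 0"
      proof (cases "t < i")
        case True
        then have "?C$$(i,t) = 0" using Suc.IH C that unfolding upper_triangular_def by auto
        then show ?thesis by simp
      next
        case False
        then have "B$$(t,j) = 0" using B t that unfolding upper_triangular_def by auto
        then show ?thesis by simp
      qed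
    qed
    finally show ?thesis .
  qed
  have dg: "(?C * B)$$(i,i) = (B$$(i,i))^Suc k" if "i < n" for i
  proof -
    have "(?C * B)$$(i,i) = (\<Sum>t<n. ?C$$(i,t) * B$$(t,i))"
      using that C B by (intro mult_entry) auto
    also have "\<dots> = ?C$$(i,i) * B$$(i,i)"
    proof -
      have "(\<Sum>t<n. ?C$$(i,t) * B$$(t,i)) = (\<Sum>t<n. if t = i then ?C$$(i,i) * B$$(i,i) else 0)"
      proof (rule sum.cong[OF refl])
      fix t assume t: "t \<in> {..<n}"
      show "?C$$(i,t) * B$$(t,i) = (if t = i then ?C$$(i,i) * B$$(i,i) else 0)"
      proof (cases "t < i")
        case True
        then have "?C$$(i,t) = 0" using Suc.IH C that unfolding upper_triangular_def by auto
        then show ?thesis using True by simp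
      next
        case False
        then have "i < t \<or> t = i" by auto
        then have "t = i \<or> B$$(t,i) = 0" using B t that unfolding upper_triangular_def by auto
        then show ?thesis by auto
      qed
      qed
      then show ?thesis using that by simp
    qed
    also have "\<dots> = (B$$(i,i))^Suc k" using Suc.IH that by simp
    finally show ?thesis .
  qed
  show ?case using lo dg C B by (auto simp: upper_triangular_def)
qed

lemma pow_mat_add:
  fixes A :: "'a::comm_ring_1 mat"
  assumes A: "A \<in> carrier_mat n n"
  shows "A ^\<^sub>m (j + k) = A ^\<^sub>m j * A ^\<^sub>m k"
proof (induction k)
  case 0
  then show ?case using A by simp
next
  case (Suc k)
  have "A ^\<^sub>m (j + Suc k) = (A ^\<^sub>m j * A ^\<^sub>m k) * A" using Suc by simp
  also have "\<dots> = A ^\<^sub>m j * (A ^\<^sub>m k * A)" using A by (intro assoc_mult_mat) auto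
  finally show ?case by simp
qed



lemma trace_pow:
  fixes A :: "real mat" and mu :: "real list"
  assumes A: "A \<in> carrier_mat n n" and cp: "char_poly A = (\<Prod>a\<leftarrow>mu. [:- a, 1:])"
  shows "(\<Sum>a<n. (A ^\<^sub>m j)$$(a,a)) = (\<Sum>i<n. (mu!i)^j)"
proof -
  obtain B P Q where sd: "schur_decomposition A mu = (B,P,Q)" by (cases "schur_decomposition A mu") auto
  from schur_decomposition[OF A cp sd] have sw: "similar_mat_wit A B P Q"
    and ut: "upper_triangular B" and dg: "diag_mat B = mu" by auto
  from similar_mat_witD2[OF A sw] have B: "B \<in> carrier_mat n n" and P: "P \<in> carrier_mat n n"
    and Q: "Q \<in> carrier_mat n n" and QP: "Q * P = 1\<^sub>m n" by auto
  have "A ^\<^sub>m j = P * B ^\<^sub>m j * Q" by (rule similar_mat_wit_pow_id[OF sw])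
  then have "(\<Sum>a<n. (A ^\<^sub>m j)$$(a,a)) = mtr n (P * B ^\<^sub>m j * Q)" by (simp add: mtr_def)
  also have "\<dots> = mtr n (B ^\<^sub>m j)" using B P Q QP by (intro mtr_sim) auto
  also have "\<dots> = (\<Sum>i<n. (B$$(i,i))^j)" using upper_pow[OF B ut, of j] by (simp add: mtr_def)
  also have "\<dots> = (\<Sum>i<n. (mu!i)^j)"
    using dg B by (auto simp: diag_mat_def intro!: sum.cong)
  finally show ?thesis .
qed

lemma pow_sym:
  fixes A :: "real mat"
  assumes A: "A \<in> carrier_mat n n" and sym: "\<And>a b. a < n \<Longrightarrow> b < n \<Longrightarrow> A$$(a,b) = A$$(b,a)"
  shows "a < n \<Longrightarrow> b < n \<Longrightarrow> (A ^\<^sub>m j)$$(a,b) = (A ^\<^sub>m j)$$(b,a)"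
proof (induction j arbitrary: a b)
  case 0
  then show ?case using A by auto
next
  case (Suc j)
  have e1: "A ^\<^sub>m Suc j = A ^\<^sub>m j * A ^\<^sub>m 1" using pow_mat_add[OF A, of j 1] by simp
  have e2: "A ^\<^sub>m Suc j = A ^\<^sub>m 1 * A ^\<^sub>m j" using pow_mat_add[OF A, of 1 j] by simp
  have A1: "A ^\<^sub>m 1 = A" using A by simp
  have "(A ^\<^sub>m Suc j)$$(a,b) = (\<Sum>t<n. (A ^\<^sub>m j)$$(a,t) * A$$(t,b))"
    unfolding e1 A1 using Suc.prems A by (intro mult_entry) auto
  also have "\<dots> = (\<Sum>t<n. A$$(b,t) * (A ^\<^sub>m j)$$(t,a))"
    using Suc sym by (auto intro!: sum.cong simp: mult.commute)
  also have "\<dots> = (A ^\<^sub>m Suc j)$$(b,a)"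
    unfolding e2 A1 using Suc.prems A by (intro mult_entry[symmetric]) auto
  finally show ?case .
qed



lemma cs_sum:
  fixes a b :: "'i \<Rightarrow> real"
  shows "(\<Sum>i\<in>I. a i * b i)^2 \<le> (\<Sum>i\<in>I. (a i)^2) * (\<Sum>i\<in>I. (b i)^2)"
proof -
  let ?A = "\<Sum>i\<in>I. (a i)^2" and ?B = "\<Sum>i\<in>I. (b i)^2" and ?C = "\<Sum>i\<in>I. a i * b i"
  have "0 \<le> (\<Sum>i\<in>I. \<Sum>j\<in>I. (a i * b j - a j * b i)^2)" by (intro sum_nonneg) auto
  also have "\<dots> = (\<Sum>i\<in>I. \<Sum>j\<in>I. ((a i)^2 * (b j)^2 + (b i)^2 * (a j)^2) - 2 * ((a i * b i) * (a j * b j)))"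
    by (intro sum.cong refl) (simp add: power2_eq_square algebra_simps)
  also have "\<dots> = (\<Sum>i\<in>I. \<Sum>j\<in>I. (a i)^2 * (b j)^2) + (\<Sum>i\<in>I. \<Sum>j\<in>I. (b i)^2 * (a j)^2)
        - 2 * (\<Sum>i\<in>I. \<Sum>j\<in>I. (a i * b i) * (a j * b j))"
    by (simp only: sum_subtractf sum.distrib sum_distrib_left)
  also have "\<dots> = ?A * ?B + ?B * ?A - 2 * (?C * ?C)"
    by (simp only: sum_product)
  finally show ?thesis by (simp add: power2_eq_square algebra_simps)
qed

lemma sum_sq_le_card:
  fixes x :: "'i \<Rightarrow> real"
  shows "(\<Sum>i\<in>I. x i)^2 \<le> real (card I) * (\<Sum>i\<in>I. (x i)^2)"
  using cs_sum[of x "\<lambda>_. 1" I] by (simp add: mult.commute)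

lemma swap4:
  "(\<Sum>a\<in>A. \<Sum>b\<in>A. \<Sum>t\<in>T. \<Sum>s\<in>T. f a b t s) = (\<Sum>t\<in>T. \<Sum>s\<in>T. \<Sum>a\<in>A. \<Sum>b\<in>A. f a b t s)"
proof -
  have "(\<Sum>a\<in>A. \<Sum>b\<in>A. \<Sum>t\<in>T. \<Sum>s\<in>T. f a b t s) = (\<Sum>a\<in>A. \<Sum>t\<in>T. \<Sum>b\<in>A. \<Sum>s\<in>T. f a b t s)"
    by (rule sum.cong[OF refl], rule sum.swap)
  also have "\<dots> = (\<Sum>a\<in>A. \<Sum>t\<in>T. \<Sum>s\<in>T. \<Sum>b\<in>A. f a b t s)"
    by (rule sum.cong[OF refl], rule sum.cong[OF refl], rule sum.swap)
  also have "\<dots> = (\<Sum>t\<in>T. \<Sum>a\<in>A. \<Sum>s\<in>T. \<Sum>b\<in>A. f a b t s)"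
    by (rule sum.swap)
  also have "\<dots> = (\<Sum>t\<in>T. \<Sum>s\<in>T. \<Sum>a\<in>A. \<Sum>b\<in>A. f a b t s)"
    by (rule sum.cong[OF refl], rule sum.swap)
  finally show ?thesis .
qed

lemma gram_sq:
  fixes N :: "nat \<Rightarrow> nat \<Rightarrow> real"
  shows "(\<Sum>a<n. \<Sum>b<n. (\<Sum>t<n. N t a * N t b)^2) = (\<Sum>t<n. \<Sum>s<n. (\<Sum>a<n. N t a * N s a)^2)"
proof -
  have "(\<Sum>a<n. \<Sum>b<n. (\<Sum>t<n. N t a * N t b)^2) = (\<Sum>a<n. \<Sum>b<n. \<Sum>t<n. \<Sum>s<n. (N t a * N s a) * (N t b * N s b))"
    by (simp only: power2_eq_square sum_product) (simp only: mult_ac)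
  also have "\<dots> = (\<Sum>t<n. \<Sum>s<n. \<Sum>a<n. \<Sum>b<n. (N t a * N s a) * (N t b * N s b))"
    by (rule swap4)
  also have "\<dots> = (\<Sum>t<n. \<Sum>s<n. (\<Sum>a<n. N t a * N s a)^2)"
    by (simp only: power2_eq_square sum_product)
  finally show ?thesis .
qed

lemma pinch:
  fixes N :: "nat \<Rightarrow> nat \<Rightarrow> real" and c :: "nat \<Rightarrow> nat"
  assumes ck: "\<forall>a<n. c a < k"
  shows "(\<Sum>a<n. \<Sum>b<n. (\<Sum>t<n. N t a * N t b)^2)
     \<le> real k * (\<Sum>a<n. \<Sum>b<n. if c a = c b then (\<Sum>t<n. N t a * N t b)^2 else 0)"
proof -
  define Ni where "Ni i t a = (if c a = i then N t a else 0)" for i t a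
  define X where "X i t s = (\<Sum>a<n. Ni i t a * Ni i s a)" for i t s
  have G: "(\<Sum>a<n. N t a * N s a) = (\<Sum>i<k. X i t s)" for t s
  proof -
    have "(\<Sum>a<n. N t a * N s a) = (\<Sum>a<n. \<Sum>i<k. Ni i t a * Ni i s a)"
    proof (rule sum.cong[OF refl])
      fix a assume "a \<in> {..<n}"
      then have "c a \<in> {..<k}" using ck by auto
      then show "N t a * N s a = (\<Sum>i<k. Ni i t a * Ni i s a)"
        unfolding Ni_def by (simp add: if_distrib[of "\<lambda>x. x * _"] cong: if_cong)
    qed
    also have "\<dots> = (\<Sum>i<k. X i t s)" unfolding X_def by (rule sum.swap)
    finally show ?thesis .
  qed
  have "(\<Sum>a<n. \<Sum>b<n. (\<Sum>t<n. N t a * N t b)^2) = (\<Sum>t<n. \<Sum>s<n. (\<Sum>a<n. N t a * N s a)^2)"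
    by (rule gram_sq)
  also have "\<dots> = (\<Sum>t<n. \<Sum>s<n. (\<Sum>i<k. X i t s)^2)"
    by (simp only: G)
  also have "\<dots> \<le> (\<Sum>t<n. \<Sum>s<n. real k * (\<Sum>i<k. (X i t s)^2))"
    by (intro sum_mono) (use sum_sq_le_card[of "\<lambda>i. X i _ _" "{..<k}"] in simp)
  also have "\<dots> = real k * (\<Sum>t<n. \<Sum>s<n. \<Sum>i<k. (X i t s)^2)"
    by (simp only: sum_distrib_left)
  also have "(\<Sum>t<n. \<Sum>s<n. \<Sum>i<k. (X i t s)^2) = (\<Sum>t<n. \<Sum>i<k. \<Sum>s<n. (X i t s)^2)"
    by (rule sum.cong[OF refl], rule sum.swap)
  also have "\<dots> = (\<Sum>i<k. \<Sum>t<n. \<Sum>s<n. (X i t s)^2)"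
    by (rule sum.swap)
  also have "(\<Sum>i<k. \<Sum>t<n. \<Sum>s<n. (X i t s)^2) = (\<Sum>i<k. \<Sum>a<n. \<Sum>b<n. (\<Sum>t<n. Ni i t a * Ni i t b)^2)"
    unfolding X_def by (rule sum.cong[OF refl], rule gram_sq[symmetric])
  also have "\<dots> = (\<Sum>i<k. \<Sum>a<n. \<Sum>b<n. if c a = i \<and> c b = i then (\<Sum>t<n. N t a * N t b)^2 else 0)"
    unfolding Ni_def by (intro sum.cong refl) auto
  also have "\<dots> = (\<Sum>a<n. \<Sum>b<n. \<Sum>i<k. if c a = i \<and> c b = i then (\<Sum>t<n. N t a * N t b)^2 else 0)"
    by (subst sum.swap, rule sum.cong[OF refl], rule sum.swap)
  also have "\<dots> = (\<Sum>a<n. \<Sum>b<n. if c a = c b then (\<Sum>t<n. N t a * N t b)^2 else 0)"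
  proof (intro sum.cong refl)
    fix a b assume "a \<in> {..<n}" "b \<in> {..<n}"
    then have "c a \<in> {..<k}" using ck by auto
    then show "(\<Sum>i<k. if c a = i \<and> c b = i then (\<Sum>t<n. N t a * N t b)^2 else 0) =
       (if c a = c b then (\<Sum>t<n. N t a * N t b)^2 else 0)"
      by (cases "c a = c b") (auto simp: sum.neutral)
  qed
  finally show ?thesis by simp
qed

lemma cs_double:
  fixes f g :: "nat \<Rightarrow> nat \<Rightarrow> real"
  shows "(\<Sum>a<n. \<Sum>b<n. f a b * g a b)^2 \<le> (\<Sum>a<n. \<Sum>b<n. (f a b)^2) * (\<Sum>a<n. \<Sum>b<n. (g a b)^2)"
  using cs_sum[of "\<lambda>(a,b). f a b" "\<lambda>(a,b). g a b" "{..<n} \<times> {..<n}"]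
  by (simp add: sum.cartesian_product case_prod_beta)

lemma key_ineq:
  fixes N A :: "nat \<Rightarrow> nat \<Rightarrow> real" and c :: "nat \<Rightarrow> nat"
  assumes ck: "\<forall>a<n. c a < k" and k: "k > 0"
    and Az: "\<forall>a<n. \<forall>b<n. c a = c b \<longrightarrow> A a b = 0"
    and e1: "(\<Sum>a<n. \<Sum>b<n. (\<Sum>t<n. N t a * N t b) * A a b) = F"
    and e2: "(\<Sum>a<n. \<Sum>b<n. (\<Sum>t<n. N t a * N t b)^2) = F"
  shows "F \<le> (1 - 1 / real k) * (\<Sum>a<n. \<Sum>b<n. (A a b)^2)"
proof -
  define M where "M a b = (\<Sum>t<n. N t a * N t b)" for a b
  define S where "S = (\<Sum>a<n. \<Sum>b<n. if c a = c b then (M a b)^2 else 0)"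
  define R where "R = (\<Sum>a<n. \<Sum>b<n. (if c a = c b then 0 else M a b)^2)"
  define T where "T = (\<Sum>a<n. \<Sum>b<n. (A a b)^2)"
  have T0: "T \<ge> 0" unfolding T_def by (intro sum_nonneg) auto
  have F0: "F \<ge> 0" using e2[symmetric] by (simp add: sum_nonneg)
  have pt: "(M a b)^2 = (if c a = c b then (M a b)^2 else 0) + (if c a = c b then 0 else M a b)^2" for a b
    by simp
  have FSR: "F = S + R"
  proof -
    have "F = (\<Sum>a<n. \<Sum>b<n. (M a b)^2)" unfolding e2[symmetric] M_def ..
    also have "\<dots> = (\<Sum>a<n. \<Sum>b<n. (if c a = c b then (M a b)^2 else 0) + (if c a = c b then 0 else M a b)^2)"
      by (subst pt) (rule refl)
    also have "\<dots> = S + R" unfolding S_def R_def by (simp only: sum.distrib)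
    finally show ?thesis .
  qed
  have FS: "F \<le> real k * S" using pinch[OF ck, of N] unfolding S_def M_def e2 .
  have "F = (\<Sum>a<n. \<Sum>b<n. (if c a = c b then 0 else M a b) * A a b)"
    unfolding e1[symmetric] M_def using Az by (intro sum.cong refl) auto
  then have "F^2 \<le> R * T" unfolding R_def T_def by (simp only: cs_double)
  also have "R * T \<le> (F - F / real k) * T"
  proof (rule mult_right_mono[OF _ T0])
    have "F / real k \<le> S" using FS k by (simp add: field_simps)
    then show "R \<le> F - F / real k" using FSR by simp
  qed
  finally have ineq: "F * F \<le> F * ((1 - 1 / real k) * T)" by (simp add: power2_eq_square algebra_simps)
  show ?thesis
  proof (cases "F = 0")
    case True
    have "1 / real k \<le> 1" using k by simp
    then have "0 \<le> (1 - 1 / real k) * T" using T0 by (intro mult_nonneg_nonneg) auto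
    then show ?thesis using True unfolding T_def by simp
  next
    case False
    then have "F > 0" using F0 by simp
    then show ?thesis using ineq unfolding T_def by simp
  qed
qed



lemma interp:
  fixes f :: "real \<Rightarrow> real"
  assumes "finite S"
  shows "\<exists>q::real poly. \<forall>x\<in>S. poly q x = f x"
  using assms
proof (induction S rule: finite_induct)
  case empty
  then show ?case by auto
next
  case (insert z S)
  then obtain q where q: "\<forall>x\<in>S. poly q x = f x" by auto
  define w where "w = (\<Prod>s\<in>S. [:-s, 1:])"
  have wz: "poly w z \<noteq> 0" unfolding w_def using insert.hyps by (simp add: poly_prod)
  have wS: "poly w x = 0" if "x \<in> S" for x
    unfolding w_def using insert.hyps that by (simp add: poly_prod prod_zero_iff)
  define q' where "q' = q + Polynomial.smult ((f z - poly q z) / poly w z) w"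
  have "\<forall>x\<in>insert z S. poly q' x = f x"
    using q wS wz unfolding q'_def by auto
  then show ?case by blast
qed

lemma pos_prefix:
  fixes mu :: "real list"
  assumes "sorted_wrt (\<ge>) mu" "i < length (filter (\<lambda>x. x > 0) mu)"
  shows "mu ! i > 0"
  using assms
proof (induction mu arbitrary: i)
  case Nil
  then show ?case by simp
next
  case (Cons x xs)
  show ?case
  proof (cases "x > 0")
    case True
    then show ?thesis using Cons by (cases i) auto
  next
    case False
    then have "filter (\<lambda>x. x > 0) xs = []" using Cons.prems(1) by (auto simp: filter_empty_conv)
    then show ?thesis using Cons.prems(2) False by simp
  qed
qed

lemma swap4':
  "(\<Sum>a\<in>A. \<Sum>b\<in>B. \<Sum>t\<in>T. \<Sum>s\<in>S. f a b t s) = (\<Sum>t\<in>T. \<Sum>s\<in>S. \<Sum>a\<in>A. \<Sum>b\<in>B. f a b t s)"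
proof -
  have "(\<Sum>a\<in>A. \<Sum>b\<in>B. \<Sum>t\<in>T. \<Sum>s\<in>S. f a b t s) = (\<Sum>a\<in>A. \<Sum>t\<in>T. \<Sum>b\<in>B. \<Sum>s\<in>S. f a b t s)"
    by (rule sum.cong[OF refl], rule sum.swap)
  also have "\<dots> = (\<Sum>a\<in>A. \<Sum>t\<in>T. \<Sum>s\<in>S. \<Sum>b\<in>B. f a b t s)"
    by (rule sum.cong[OF refl], rule sum.cong[OF refl], rule sum.swap)
  also have "\<dots> = (\<Sum>t\<in>T. \<Sum>a\<in>A. \<Sum>s\<in>S. \<Sum>b\<in>B. f a b t s)"
    by (rule sum.swap)
  also have "\<dots> = (\<Sum>t\<in>T. \<Sum>s\<in>S. \<Sum>a\<in>A. \<Sum>b\<in>B. f a b t s)"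
    by (rule sum.cong[OF refl], rule sum.swap)
  finally show ?thesis .
qed

lemma bil:
  fixes A :: "real mat" and mu :: "real list"
  assumes A: "A \<in> carrier_mat n n" and cp: "char_poly A = (\<Prod>a\<leftarrow>mu. [:- a, 1:])"
    and sym: "\<And>a b. a < n \<Longrightarrow> b < n \<Longrightarrow> A$$(a,b) = A$$(b,a)"
  shows "(\<Sum>a<n. \<Sum>b<n. (A ^\<^sub>m p)$$(a,b) * (A ^\<^sub>m r)$$(a,b)) = (\<Sum>i<n. (mu!i)^(p+r))"
proof -
  have "(\<Sum>a<n. \<Sum>b<n. (A ^\<^sub>m p)$$(a,b) * (A ^\<^sub>m r)$$(a,b)) = (\<Sum>a<n. (A ^\<^sub>m (p+r))$$(a,a))"
  proof (rule sum.cong[OF refl])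
    fix a assume a: "a \<in> {..<n}"
    have "(\<Sum>b<n. (A ^\<^sub>m p)$$(a,b) * (A ^\<^sub>m r)$$(a,b)) = (\<Sum>b<n. (A ^\<^sub>m p)$$(a,b) * (A ^\<^sub>m r)$$(b,a))"
      using pow_sym[OF A sym] a by (intro sum.cong refl) auto
    also have "\<dots> = (A ^\<^sub>m p * A ^\<^sub>m r)$$(a,a)"
      using a A by (intro mult_entry[symmetric]) auto
    also have "\<dots> = (A ^\<^sub>m (p+r))$$(a,a)" using pow_mat_add[OF A] by simp
    finally show "(\<Sum>b<n. (A ^\<^sub>m p)$$(a,b) * (A ^\<^sub>m r)$$(a,b)) = (A ^\<^sub>m (p+r))$$(a,a)" .
  qed
  also have "\<dots> = (\<Sum>i<n. (mu!i)^(p+r))" by (rule trace_pow[OF A cp])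
  finally show ?thesis .
qed

lemma L_gen:
  fixes A :: "real mat" and mu :: "real list"
  assumes A: "A \<in> carrier_mat n n" and cp: "char_poly A = (\<Prod>a\<leftarrow>mu. [:- a, 1:])"
    and sym: "\<And>a b. a < n \<Longrightarrow> b < n \<Longrightarrow> A$$(a,b) = A$$(b,a)"
  shows "(\<Sum>a<n. \<Sum>b<n. (\<Sum>u\<in>U. x u * (A ^\<^sub>m f u)$$(a,b)) * (\<Sum>v\<in>V. y v * (A ^\<^sub>m g v)$$(a,b)))
    = (\<Sum>i<n. (\<Sum>u\<in>U. x u * (mu!i)^(f u)) * (\<Sum>v\<in>V. y v * (mu!i)^(g v)))"
proof -
  have "(\<Sum>a<n. \<Sum>b<n. (\<Sum>u\<in>U. x u * (A ^\<^sub>m f u)$$(a,b)) * (\<Sum>v\<in>V. y v * (A ^\<^sub>m g v)$$(a,b)))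
     = (\<Sum>a<n. \<Sum>b<n. \<Sum>u\<in>U. \<Sum>v\<in>V. (x u * y v) * ((A ^\<^sub>m f u)$$(a,b) * (A ^\<^sub>m g v)$$(a,b)))"
    by (simp only: sum_product) (simp only: mult_ac)
  also have "\<dots> = (\<Sum>u\<in>U. \<Sum>v\<in>V. \<Sum>a<n. \<Sum>b<n. (x u * y v) * ((A ^\<^sub>m f u)$$(a,b) * (A ^\<^sub>m g v)$$(a,b)))"
    by (rule swap4')
  also have "\<dots> = (\<Sum>u\<in>U. \<Sum>v\<in>V. (x u * y v) * (\<Sum>i<n. (mu!i)^(f u + g v)))"
    by (simp only: sum_distrib_left[symmetric] bil[OF A cp sym])
  also have "\<dots> = (\<Sum>u\<in>U. \<Sum>v\<in>V. \<Sum>i<n. (x u * y v) * (mu!i)^(f u + g v))"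
    by (simp only: sum_distrib_left)
  also have "\<dots> = (\<Sum>u\<in>U. \<Sum>v\<in>V. \<Sum>i<n. (x u * (mu!i)^(f u)) * (y v * (mu!i)^(g v)))"
    by (intro sum.cong refl) (simp add: power_add mult_ac)
  also have "\<dots> = (\<Sum>u\<in>U. \<Sum>i<n. \<Sum>v\<in>V. (x u * (mu!i)^(f u)) * (y v * (mu!i)^(g v)))"
    by (rule sum.cong[OF refl], rule sum.swap)
  also have "\<dots> = (\<Sum>i<n. \<Sum>u\<in>U. \<Sum>v\<in>V. (x u * (mu!i)^(f u)) * (y v * (mu!i)^(g v)))"
    by (rule sum.swap)
  also have "\<dots> = (\<Sum>i<n. (\<Sum>u\<in>U. x u * (mu!i)^(f u)) * (\<Sum>v\<in>V. y v * (mu!i)^(g v)))"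
    by (simp only: sum_product)
  finally show ?thesis .
qed



lemma edges2:
  assumes sg: "simple_graph n E"
  shows "card {(a,b). a<n \<and> b<n \<and> E a b} = 2 * num_edges n E"
proof -
  define X where "X = {(i, j). i < j \<and> j < n \<and> E i j}"
  define Y where "Y = {(i, j). j < i \<and> i < n \<and> E i j}"
  have fX: "finite X" unfolding X_def by (rule finite_subset[of _ "{..<n} \<times> {..<n}"]) auto
  have un: "{(a,b). a<n \<and> b<n \<and> E a b} = X \<union> Y"
    using sg unfolding X_def Y_def simple_graph_def by (auto simp: linorder_neq_iff, metis linorder_neqE_nat)
  have Yim: "Y = (\<lambda>(i,j). (j,i)) ` X"
    using sg unfolding X_def Y_def simple_graph_def by (auto simp: image_iff)
  have inj: "inj_on (\<lambda>(i,j). (j,i)) X" by (auto simp: inj_on_def)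
  have cY: "card Y = card X" unfolding Yim by (rule card_image[OF inj])
  have fY: "finite Y" unfolding Yim using fX by simp
  have dj: "X \<inter> Y = {}" unfolding X_def Y_def by auto
  have "card (X \<union> Y) = card X + card Y" by (rule card_Un_disjoint[OF fX fY dj])
  then show ?thesis unfolding un num_edges_def X_def[symmetric] using cY by simp
qed

theorem mainTheorem1:
  fixes n :: nat and E :: "nat \<Rightarrow> nat \<Rightarrow> bool" and mu :: "real list"
  assumes "simple_graph n E"
    and "clique_number n E = chromatic_number n E"
    and "adj_eigenvalues_sorted n E mu"
  shows "(\<Sum>i<min (length (filter (\<lambda>x. x > 0) mu)) (clique_number n E). (mu ! i)^2)
           \<le> 2 * real (num_edges n E) * (real (clique_number n E) - 1) / real (clique_number n E)"
proof -
  note sg = assms(1)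
  define k where "k = chromatic_number n E"
  have ex: "\<exists>k c. proper_colouring n E k c"
    using sg by (intro exI[of _ n] exI[of _ "\<lambda>i. i"]) (auto simp: proper_colouring_def simple_graph_def)
  then have "\<exists>c. proper_colouring n E k c" unfolding k_def chromatic_number_def
    by (rule LeastI_ex)
  then obtain c where pc: "proper_colouring n E k c" by blast
  have cn: "clique_number n E = k" using assms(2) k_def by simp
  define A where "A = adj_matrix n E"
  have len: "length mu = n" and srt: "sorted_wrt (\<ge>) mu"
    and cp: "char_poly A = (\<Prod>a\<leftarrow>mu. [:- a, 1:])"
    using assms(3) unfolding adj_eigenvalues_sorted_def A_def by auto
  have Ac: "A \<in> carrier_mat n n" unfolding A_def adj_matrix_def by simp
  have Ae: "A$$(a,b) = (if E a b then 1 else 0)" if "a < n" "b < n" for a b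
    using that unfolding A_def adj_matrix_def by simp
  have sym: "A$$(a,b) = A$$(b,a)" if "a < n" "b < n" for a b
    using that sg Ae unfolding simple_graph_def by simp
  have A1: "A ^\<^sub>m 1 = A" using Ac by simp
  define F where "F = (\<Sum>i<n. (max (mu!i) 0)^2)"
  define T where "T = (\<Sum>a<n. \<Sum>b<n. (A$$(a,b))^2)"
  define l where "l = min (length (filter (\<lambda>x. x > 0) mu)) k"
  have lF: "(\<Sum>i<l. (mu ! i)^2) \<le> F"
  proof -
    have ln: "l \<le> n" unfolding l_def using len length_filter_le[of "\<lambda>x. x > 0" mu] by linarith
    have "(\<Sum>i<l. (mu ! i)^2) = (\<Sum>i<l. (max (mu!i) 0)^2)"
    proof (rule sum.cong[OF refl])
      fix i assume "i \<in> {..<l}"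
      then have "mu ! i > 0" using pos_prefix[OF srt] unfolding l_def by auto
      then show "(mu ! i)^2 = (max (mu!i) 0)^2" by simp
    qed
    also have "\<dots> \<le> F" unfolding F_def using ln by (intro sum_mono2) auto
    finally show ?thesis .
  qed
  have T2: "T = 2 * real (num_edges n E)"
  proof -
    have "T = (\<Sum>a<n. \<Sum>b<n. of_bool (E a b))" unfolding T_def using Ae by (intro sum.cong refl) auto
    also have "\<dots> = (\<Sum>(a,b)\<in>{..<n} \<times> {..<n}. of_bool (E a b))"
      by (rule sum.cartesian_product)
    also have "\<dots> = (\<Sum>p\<in>{..<n} \<times> {..<n}. of_bool (case_prod E p))"
      by (intro sum.cong refl) auto
    also have "\<dots> = real (card ({..<n} \<times> {..<n} \<inter> {p. case_prod E p}))"
      by simp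
    also have "{..<n} \<times> {..<n} \<inter> {p. case_prod E p} = {(a,b). a<n \<and> b<n \<and> E a b}" by auto
    finally show ?thesis using edges2[OF sg] by simp
  qed
  show ?thesis
  proof (cases "k = 0")
    case True
    then show ?thesis unfolding cn by simp
  next
    case False
    then have k0: "k > 0" by simp
    have FT: "F \<le> (1 - 1 / real k) * T"
    proof -
      obtain q :: "real poly" where q: "\<forall>x\<in>set mu. poly q x = sqrt (max x 0)"
        using interp[of "set mu" "\<lambda>x. sqrt (max x 0)"] by auto
      define D where "D = degree q"
      define cf where "cf = coeff q"
      define J where "J = {..D} \<times> {..D}"
      define w where "w = (\<lambda>p. cf (fst p) * cf (snd p))"
      define e where "e = (\<lambda>p::nat\<times>nat. fst p + snd p)"
      define N where "N t a = (\<Sum>j\<le>D. cf j * (A ^\<^sub>m j)$$(t,a))" for t a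
      have Mexp: "(\<Sum>t<n. N t a * N t b) = (\<Sum>p\<in>J. w p * (A ^\<^sub>m (e p))$$(a,b))"
        if ab: "a < n" "b < n" for a b
      proof -
        have "(\<Sum>t<n. N t a * N t b) = (\<Sum>t<n. \<Sum>j\<le>D. \<Sum>k\<le>D. (cf j * cf k) * ((A ^\<^sub>m j)$$(a,t) * (A ^\<^sub>m k)$$(t,b)))"
          unfolding N_def
          by (simp only: sum_product, intro sum.cong refl)
            (simp add: pow_sym[OF Ac sym, of _ a] ab mult_ac)
        also have "\<dots> = (\<Sum>j\<le>D. \<Sum>k\<le>D. (cf j * cf k) * (\<Sum>t<n. (A ^\<^sub>m j)$$(a,t) * (A ^\<^sub>m k)$$(t,b)))"
          by (rule trans[OF sum.swap], rule sum.cong[OF refl], rule trans[OF sum.swap], simp only: sum_distrib_left)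
        also have "\<dots> = (\<Sum>j\<le>D. \<Sum>k\<le>D. (cf j * cf k) * (A ^\<^sub>m (j+k))$$(a,b))"
          using ab Ac by (intro sum.cong refl) (simp add: pow_mat_add[OF Ac] mult_entry[symmetric])
        also have "\<dots> = (\<Sum>p\<in>J. w p * (A ^\<^sub>m (e p))$$(a,b))"
          unfolding J_def w_def e_def by (simp add: sum.cartesian_product case_prod_beta)
        finally show ?thesis .
      qed
      have qv: "(\<Sum>p\<in>J. w p * x ^ (e p)) = max x 0" if "x \<in> set mu" for x
      proof -
        have "(\<Sum>p\<in>J. w p * x ^ (e p)) = (\<Sum>j\<le>D. cf j * x^j) * (\<Sum>k\<le>D. cf k * x^k)"
          unfolding J_def w_def e_def
          by (simp add: sum_product sum.cartesian_product case_prod_beta power_add mult_ac)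
        also have "\<dots> = (poly q x)^2" unfolding cf_def D_def by (simp add: poly_altdef power2_eq_square)
        also have "\<dots> = max x 0" using q that by simp
        finally show ?thesis .
      qed
      have mui: "mu ! i \<in> set mu" if "i < n" for i using that len by simp
      have Aexp: "A$$(a,b) = (\<Sum>u\<in>{0::nat}. 1 * (A ^\<^sub>m ((\<lambda>_. 1) u))$$(a,b))" for a b
        using A1 by simp
      have e1: "(\<Sum>a<n. \<Sum>b<n. (\<Sum>t<n. N t a * N t b) * A$$(a,b)) = F"
      proof -
        have "(\<Sum>a<n. \<Sum>b<n. (\<Sum>t<n. N t a * N t b) * A$$(a,b))
          = (\<Sum>a<n. \<Sum>b<n. (\<Sum>p\<in>J. w p * (A ^\<^sub>m (e p))$$(a,b)) * (\<Sum>u\<in>{0::nat}. 1 * (A ^\<^sub>m ((\<lambda>_. 1) u))$$(a,b)))"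
          using Mexp Aexp by (intro sum.cong refl) auto
        also have "\<dots> = (\<Sum>i<n. (\<Sum>p\<in>J. w p * (mu!i)^(e p)) * (\<Sum>u\<in>{0::nat}. 1 * (mu!i)^((\<lambda>_. 1) u)))"
          by (rule L_gen[OF Ac cp sym])
        also have "\<dots> = F" unfolding F_def using qv mui
          by (intro sum.cong refl) (auto simp: power2_eq_square max_def)
        finally show ?thesis .
      qed
      have e2: "(\<Sum>a<n. \<Sum>b<n. (\<Sum>t<n. N t a * N t b)^2) = F"
      proof -
        have "(\<Sum>a<n. \<Sum>b<n. (\<Sum>t<n. N t a * N t b)^2)
          = (\<Sum>a<n. \<Sum>b<n. (\<Sum>p\<in>J. w p * (A ^\<^sub>m (e p))$$(a,b)) * (\<Sum>p\<in>J. w p * (A ^\<^sub>m (e p))$$(a,b)))"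
          using Mexp by (intro sum.cong refl) (auto simp: power2_eq_square)
        also have "\<dots> = (\<Sum>i<n. (\<Sum>p\<in>J. w p * (mu!i)^(e p)) * (\<Sum>p\<in>J. w p * (mu!i)^(e p)))"
          by (rule L_gen[OF Ac cp sym])
        also have "\<dots> = F" unfolding F_def using qv mui
          by (intro sum.cong refl) (auto simp: power2_eq_square)
        finally show ?thesis .
      qed
      have ck: "\<forall>a<n. c a < k" using pc unfolding proper_colouring_def by auto
      have Az: "\<forall>a<n. \<forall>b<n. c a = c b \<longrightarrow> A$$(a,b) = 0"
        using pc Ae unfolding proper_colouring_def by auto
      show ?thesis using key_ineq[OF ck k0 Az e1 e2] unfolding T_def .
    qed
    have "(\<Sum>i<l. (mu ! i)^2) \<le> (1 - 1 / real k) * (2 * real (num_edges n E))"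
      using lF FT T2 by simp
    also have "\<dots> = 2 * real (num_edges n E) * (real k - 1) / real k"
      using k0 by (simp add: field_simps)
    finally show ?thesis unfolding cn l_def .
  qed
qed


end
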